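(* Let $q=2p$ with $p$ an odd prime. Consider the map $\mathcal S$ sending a pair of integers $(q_1,q_2)$ with $q_1,q_2,q_1+q_2,q_1-q_2$ all $\not\equiv0\pmod q$ to $\mathcal S(q_1,q_2)=(\psi(q_1,q_2),\alpha(q_1,q_2),\beta(q_1,q_2))$. Then $\mathcal S$ takes at most $6$ distinct values.
   Context: Let $\gamma=e^{2\pi i/q}$. Let $A$ be the set of residues in $\{1,\dots,q-1\}$ coprime to $q$, $B=\{2,4,\dots,2(p-1)\}$ and $C=\{p\}$. For $S\subset\{1,\dots,q-1\}$ put $\Pi_S(q_1,q_2)(z)=\sum_{l\in S}\prod_{i=1}^{2}(z-\gamma^{q_il})(z-\gamma^{-q_il})$; then $\psi=\Pi_A$, $\alpha=\Pi_B$, $\beta=\Pi_C$. *)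

theory Defs
  imports "HOL-Computational_Algebra.Polynomial" Complex_Main
begin

text \<open>gamma = exp(2 pi i / q); gamma^(k) for integer k is cis(2 pi k / q).\<close>
definition gpow :: "nat \<Rightarrow> int \<Rightarrow> complex" where
  "gpow q k = cis (2 * pi * of_int k / of_nat q)"

definition PiS :: "nat \<Rightarrow> nat set \<Rightarrow> int \<Rightarrow> int \<Rightarrow> complex poly" where
  "PiS q S q1 q2 = (\<Sum>l\<in>S.
       ([:- gpow q (q1 * int l), 1:] * [:- gpow q (- q1 * int l), 1:]) *
       ([:- gpow q (q2 * int l), 1:] * [:- gpow q (- q2 * int l), 1:]))"

definition setA :: "nat \<Rightarrow> nat set" where
  "setA q = {l \<in> {1..q - 1}. coprime l q}"

definition setB :: "nat \<Rightarrow> nat set" where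
  "setB p = {2 * k | k. 1 \<le> k \<and> k \<le> p - 1}"

definition setC :: "nat \<Rightarrow> nat set" where
  "setC p = {p}"

definition psiP :: "nat \<Rightarrow> int \<Rightarrow> int \<Rightarrow> complex poly" where
  "psiP p q1 q2 = PiS (2 * p) (setA (2 * p)) q1 q2"

definition alphaP :: "nat \<Rightarrow> int \<Rightarrow> int \<Rightarrow> complex poly" where
  "alphaP p q1 q2 = PiS (2 * p) (setB p) q1 q2"

definition betaP :: "nat \<Rightarrow> int \<Rightarrow> int \<Rightarrow> complex poly" where
  "betaP p q1 q2 = PiS (2 * p) (setC p) q1 q2"

end

theory Submission
  imports Defs
begin


lemma gpow_add: "gpow q (a + b) = gpow q a * gpow q b"
  unfolding gpow_def by (simp add: cis_mult add_divide_distrib distrib_left)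

lemma gpow_qmult: "q > 0 \<Longrightarrow> gpow q (int q * m) = 1"
proof -
  assume "q > 0"
  have "2 * pi * of_int (int q * m) / of_nat q = 2 * pi * (of_int m :: real)"
    using \<open>q>0\<close> by simp
  then show ?thesis unfolding gpow_def by simp
qed

lemma gpow_mod: "q > 0 \<Longrightarrow> gpow q (k mod int q) = gpow q k"
proof -
  assume q: "q > 0"
  have "gpow q k = gpow q (k mod int q + int q * (k div int q))" by simp
  also have "\<dots> = gpow q (k mod int q)" by (simp only: gpow_add gpow_qmult[OF q] mult_1_right)
  finally show ?thesis by simp
qed

lemma gpow_cong: "q > 0 \<Longrightarrow> a mod int q = b mod int q \<Longrightarrow> gpow q a = gpow q b"
  by (metis gpow_mod)

lemma gpow_neg: "gpow q k * gpow q (-k) = 1"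
  by (metis add.right_inverse gpow_add gpow_def cis_zero mult_zero_right of_int_0 div_0)

definition T :: "nat \<Rightarrow> int \<Rightarrow> complex" where "T q k = gpow q k + gpow q (-k)"
definition W :: "nat \<Rightarrow> nat set \<Rightarrow> int \<Rightarrow> complex" where "W q S n = (\<Sum>l\<in>S. T q (n * int l))"
definition H :: "complex \<Rightarrow> complex \<Rightarrow> complex \<Rightarrow> complex poly" where
  "H k a b = [:k, -a, 2*k+b, -a, k:]"

lemma T_mul: "T q a * T q b = T q (a + b) + T q (a - b)"
  unfolding T_def
  by (simp add: gpow_add[symmetric] algebra_simps)

lemma quad: "[:- gpow q a, 1:] * [:- gpow q (- a), 1:] = [:1, - T q a, 1:]"
  using gpow_neg[of q a] by (simp add: T_def algebra_simps)

lemma quad2: "[:1, - s, 1:] * [:1, - t, 1:] = [:1::complex, -(s+t), 2 + s*t, -(s+t), 1:]"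
  by (simp add: algebra_simps)

lemma H_sum: "(\<Sum>l\<in>S. H 1 (f l) (g l)) = H (of_nat (card S)) (\<Sum>l\<in>S. f l) (\<Sum>l\<in>S. g l)"
proof (cases "finite S")
  case True
  then show ?thesis
    by (induction S rule: finite_induct) (simp_all add: H_def algebra_simps)
next
  case False
  then show ?thesis by (simp add: H_def)
qed

lemma PiS_H: "PiS q S q1 q2 = H (of_nat (card S)) (W q S q1 + W q S q2) (W q S (q1+q2) + W q S (q1-q2))"
proof -
  have "PiS q S q1 q2 = (\<Sum>l\<in>S. H 1 (T q (q1 * int l) + T q (q2 * int l))
          (T q ((q1+q2) * int l) + T q ((q1-q2) * int l)))"
    unfolding PiS_def
  proof (rule sum.cong[OF refl])
    fix l
    have e: "- q1 * int l = - (q1 * int l)" "- q2 * int l = - (q2 * int l)" by simp_all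
    show "[:- gpow q (q1 * int l), 1:] * [:- gpow q (- q1 * int l), 1:] *
        ([:- gpow q (q2 * int l), 1:] * [:- gpow q (- q2 * int l), 1:]) =
        H 1 (T q (q1 * int l) + T q (q2 * int l)) (T q ((q1 + q2) * int l) + T q ((q1 - q2) * int l))"
      unfolding e quad quad2 T_mul H_def by (simp add: algebra_simps)
  qed
  also have "\<dots> = H (of_nat (card S)) (W q S q1 + W q S q2) (W q S (q1+q2) + W q S (q1-q2))"
    unfolding H_sum W_def sum.distrib ..
  finally show ?thesis .
qed

lemma T_cong: "q > 0 \<Longrightarrow> a mod int q = b mod int q \<Longrightarrow> T q a = T q b"
  unfolding T_def using gpow_cong by (metis mod_minus_cong)

lemma W_cong: "q > 0 \<Longrightarrow> n mod int q = m mod int q \<Longrightarrow> W q S n = W q S m"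
  unfolding W_def by (intro sum.cong refl T_cong) (auto intro: mod_mult_cong)

lemma W_unit:
  assumes q: "q > 0" and fin: "finite S" and sub: "S \<subseteq> {1..<q}"
    and cl: "\<forall>l\<in>S. nat ((u * int l) mod int q) \<in> S" and cop: "coprime u (int q)"
  shows "W q S (u * n) = W q S n"
proof -
  define f where "f l = nat ((u * int l) mod int q)" for l
  have inj: "inj_on f S"
  proof
    fix a b assume a: "a \<in> S" and b: "b \<in> S" and e: "f a = f b"
    have "(u * int a) mod int q = (u * int b) mod int q"
      using e q unfolding f_def by (simp add: nat_eq_iff2)
    hence "int q dvd u * (int a - int b)"
      by (simp add: mod_eq_dvd_iff right_diff_distrib)
    hence d: "int q dvd int a - int b" using cop
      by (metis coprime_commute coprime_dvd_mult_right_iff)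
    have "a < q" "b < q" using a b sub by auto
    show "a = b"
    proof (rule ccontr)
      assume "a \<noteq> b"
      hence "int a - int b \<noteq> 0" by simp
      from dvd_imp_le_int[OF this d] have "int q \<le> \<bar>int a - int b\<bar>" by simp
      with \<open>a < q\<close> \<open>b < q\<close> show False by linarith
    qed
  qed
  have img: "f ` S = S" using endo_inj_surj[OF fin _ inj] cl unfolding f_def by auto
  have "W q S n = (\<Sum>l\<in>f ` S. T q (n * int l))" unfolding W_def img ..
  also have "\<dots> = (\<Sum>l\<in>S. T q (n * int (f l)))" by (simp add: sum.reindex[OF inj])
  also have "\<dots> = W q S (u * n)" unfolding W_def
  proof (intro sum.cong refl T_cong[OF q])
    fix l
    have "int (f l) = (u * int l) mod int q" unfolding f_def using q by simp
    thus "(n * int (f l)) mod int q = (u * n * int l) mod int q"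
      by (metis mod_mult_right_eq mult.assoc mult.commute)
  qed
  finally show ?thesis by simp
qed


lemma unit_iff:
  fixes p :: nat and u :: int
  assumes P: "prime p" "odd p"
  shows "coprime u (int (2*p)) \<longleftrightarrow> odd u \<and> \<not> int p dvd u"
proof
  assume c: "coprime u (int (2*p))"
  have p1: "int p \<noteq> 1" using P prime_gt_1_nat by fastforce
  show "odd u \<and> \<not> int p dvd u"
  proof
    show "odd u"
    proof
      assume "even u"
      hence "2 dvd gcd u (int (2*p))" by simp
      with c show False by simp
    qed
    show "\<not> int p dvd u"
    proof
      assume "int p dvd u"
      hence "int p dvd gcd u (int (2*p))" by simp
      with c p1 show False by simp
    qed
  qed
next
  assume h: "odd u \<and> \<not> int p dvd u"
  have pi: "prime (int p)" using P by simp
  have "coprime u 2" using h by (simp add: coprime_commute)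
  moreover have "coprime u (int p)" using prime_imp_coprime[OF pi] h by (simp add: coprime_commute)
  ultimately show "coprime u (int (2*p))" by simp
qed

definition good :: "nat \<Rightarrow> nat set \<Rightarrow> bool" where
  "good q S \<longleftrightarrow> finite S \<and> S \<subseteq> {1..<q} \<and>
     (\<forall>u. coprime u (int q) \<longrightarrow> (\<forall>l\<in>S. nat ((u * int l) mod int q) \<in> S))"

lemma good_A: "q > 1 \<Longrightarrow> good q (setA q)"
  unfolding good_def setA_def
proof (intro conjI allI impI ballI)
  assume q: "q > 1"
  show "finite {l \<in> {1..q - 1}. coprime l q}" by simp
  show "{l \<in> {1..q - 1}. coprime l q} \<subseteq> {1..<q}" using q by auto
  fix u :: int and l assume cu: "coprime u (int q)" and l: "l \<in> {l \<in> {1..q - 1}. coprime l q}"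
  have cl: "coprime (int l) (int q)" using l by (simp add: coprime_int_iff)
  have c: "coprime ((u * int l) mod int q) (int q)"
    using q cu cl by (simp add: coprime_mod_left_iff)
  have nn: "(u * int l) mod int q \<ge> 0" "(u * int l) mod int q < int q" using q by simp_all
  have nz: "(u * int l) mod int q \<noteq> 0"
  proof
    assume "(u * int l) mod int q = 0"
    with c have "coprime 0 (int q)" by simp
    with q show False by simp
  qed
  have "coprime (nat ((u * int l) mod int q)) q"
    using c nn by (metis coprime_int_iff int_nat_eq)
  with nn nz show "nat ((u * int l) mod int q) \<in> {l \<in> {1..q - 1}. coprime l q}" by auto
qed

lemma good_B:
  assumes P: "prime p" "odd p"
  shows "good (2*p) (setB p)"
  unfolding good_def setB_def
proof (intro conjI allI impI ballI)
  have "{2 * k |k. 1 \<le> k \<and> k \<le> p - 1} = (\<lambda>k. 2*k) ` {1..p-1}" by auto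
  thus "finite {2 * k |k. 1 \<le> k \<and> k \<le> p - 1}" by simp
  show "{2 * k |k. 1 \<le> k \<and> k \<le> p - 1} \<subseteq> {1..<2 * p}" by auto
  fix u :: int and l assume cu: "coprime u (int (2*p))" and l: "l \<in> {2 * k |k. 1 \<le> k \<and> k \<le> p - 1}"
  then obtain k where k: "l = 2*k" "1 \<le> k" "k \<le> p - 1" by auto
  have pu: "\<not> int p dvd u" using unit_iff[OF P] cu by simp
  have pi: "prime (int p)" using P by simp
  have pk: "\<not> int p dvd int k" proof
    assume "int p dvd int k"
    hence "p dvd k" by simp
    from dvd_imp_le[OF this] k show False by linarith
  qed
  have r: "(u * int l) mod int (2*p) = 2 * ((u * int k) mod int p)"
  proof -
    have "u * int l = 2 * (u * int k)" using k by simp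
    moreover have "int (2*p) = 2 * int p" by simp
    ultimately show ?thesis by (simp only: mod_mult_mult1)
  qed
  have nz: "(u * int k) mod int p \<noteq> 0"
  proof
    assume "(u * int k) mod int p = 0"
    hence "int p dvd u * int k" by auto
    with pi pu pk show False using prime_dvd_mult_iff by blast
  qed
  have b: "(u * int k) mod int p \<ge> 0" "(u * int k) mod int p < int p" using P prime_gt_0_nat by simp_all
  show "nat ((u * int l) mod int (2 * p)) \<in> {2 * k |k. 1 \<le> k \<and> k \<le> p - 1}"
    unfolding r
    by (rule CollectI, rule exI[of _ "nat ((u * int k) mod int p)"]) (use nz b in auto)
qed

lemma good_C:
  assumes P: "prime p" "odd p"
  shows "good (2*p) (setC p)"
  unfolding good_def setC_def
proof (intro conjI allI impI ballI)
  show "finite {p}" by simp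
  show "{p} \<subseteq> {1..<2*p}" using prime_gt_0_nat[OF P(1)] by auto
  fix u :: int and l assume cu: "coprime u (int (2*p))" and l: "l \<in> {p}"
  have "odd u" using unit_iff[OF P] cu by simp
  hence "u mod 2 = 1" by presburger
  have "(u * int p) mod int (2*p) = int p * (u mod 2)"
    by (simp add: mult.commute[of u] mult_mod_right[symmetric])
  hence e: "(u * int p) mod int (2*p) = int p" using \<open>u mod 2 = 1\<close> by simp
  show "nat ((u * int l) mod int (2 * p)) \<in> {p}" using e l by (metis nat_int singletonI singletonD)
qed


lemma ev_p:
  assumes P: "prime p" "odd p" and "even n" "int p dvd n"
  shows "int (2*p) dvd n"
proof -
  have pi: "prime (int p)" using P by simp
  have "\<not> int p dvd 2"
  proof
    assume "int p dvd 2"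
    hence "p dvd 2" using int_dvd_int_iff[of p 2] by simp
    hence "p \<le> 2" by (simp add: dvd_imp_le)
    hence "p = 2" using prime_ge_2_nat[OF P(1)] by linarith
    with P(2) show False by simp
  qed
  hence "coprime (int p) 2" by (rule prime_imp_coprime[OF pi])
  hence "coprime 2 (int p)" by (simp add: coprime_commute)
  from divides_mult[OF assms(3) assms(4) this]
  show ?thesis by simp
qed

definition cls :: "nat \<Rightarrow> int \<Rightarrow> int" where
  "cls p n = (if even n then 2 else if int p dvd n then int p else 1)"

lemma W_class:
  assumes P: "prime p" "odd p" and g: "good (2*p) S" and n: "\<not> int (2*p) dvd n"
  shows "W (2*p) S n = W (2*p) S (cls p n)"
proof -
  have q: "2*p > 0" using prime_gt_0_nat[OF P(1)] by simp
  have fin: "finite S" and sub: "S \<subseteq> {1..<2*p}"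
    and cl: "\<And>u. coprime u (int (2*p)) \<Longrightarrow> \<forall>l\<in>S. nat ((u * int l) mod int (2*p)) \<in> S"
    using g unfolding good_def by auto
  note WU = W_unit[OF q fin sub cl]
  show ?thesis
  proof (cases "even n")
    case True
    hence np: "\<not> int p dvd n" using ev_p[OF P] n by blast
    obtain m where m: "n = 2*m" using True by blast
    define u where "u = (if odd m then m else m + int p)"
    have pm: "\<not> int p dvd m" using np m by auto
    have uo: "odd u" using P(2) unfolding u_def by auto
    have pu: "\<not> int p dvd u" using pm unfolding u_def by (auto simp: dvd_add_left_iff)
    have cu: "coprime u (int (2*p))" by (rule unit_iff[OF P, THEN iffD2], intro conjI uo pu)
    have "n mod int (2*p) = (u * 2) mod int (2*p)"
      unfolding u_def m by auto
    hence "W (2*p) S n = W (2*p) S (u * 2)" by (rule W_cong[OF q])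
    also have "\<dots> = W (2*p) S 2" by (rule W_unit[OF q fin sub cl[OF cu] cu])
    finally show ?thesis using True by (simp add: cls_def)
  next
    case False
    show ?thesis
    proof (cases "int p dvd n")
      case True
      then obtain k where k: "n = int p * k" by blast
      have "odd k" using False k by auto
      hence "k mod 2 = 1" by presburger
      have "n mod int (2*p) = int p * (k mod 2)"
        unfolding k by (simp add: mult_mod_right[symmetric] mult.commute)
      hence "n mod int (2*p) = int p mod int (2*p)" using \<open>k mod 2 = 1\<close> q by simp
      hence "W (2*p) S n = W (2*p) S (int p)" by (rule W_cong[OF q])
      thus ?thesis using True False by (simp add: cls_def)
    next
      case nd: False
      have cu: "coprime n (int (2*p))" using unit_iff[OF P, THEN iffD2] False nd by blast
      have "W (2*p) S (n * 1) = W (2*p) S 1" by (rule W_unit[OF q fin sub cl[OF cu] cu])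
      thus ?thesis using False nd by (simp add: cls_def)
    qed
  qed
qed


definition Fn :: "nat \<Rightarrow> int \<Rightarrow> int \<Rightarrow> int \<Rightarrow> int \<Rightarrow> complex poly \<times> complex poly \<times> complex poly" where
  "Fn p a b c d =
    (H (of_nat (card (setA (2*p)))) (W (2*p) (setA (2*p)) a + W (2*p) (setA (2*p)) b)
        (W (2*p) (setA (2*p)) c + W (2*p) (setA (2*p)) d),
     H (of_nat (card (setB p))) (W (2*p) (setB p) a + W (2*p) (setB p) b)
        (W (2*p) (setB p) c + W (2*p) (setB p) d),
     H (of_nat (card (setC p))) (W (2*p) (setC p) a + W (2*p) (setC p) b)
        (W (2*p) (setC p) c + W (2*p) (setC p) d))"

lemma Fn_sym1: "Fn p a b c d = Fn p b a c d" unfolding Fn_def by (simp only: add.commute[of "W (2*p) _ a"])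
lemma Fn_sym2: "Fn p a b c d = Fn p a b d c" unfolding Fn_def by (simp only: add.commute[of "W (2*p) _ c"])

lemma triple_eq:
  assumes P: "prime p" "odd p"
    and v: "\<not> int (2 * p) dvd q1" "\<not> int (2 * p) dvd q2"
      "\<not> int (2 * p) dvd (q1 + q2)" "\<not> int (2 * p) dvd (q1 - q2)"
  shows "(psiP p q1 q2, alphaP p q1 q2, betaP p q1 q2) =
     Fn p (cls p q1) (cls p q2) (cls p (q1+q2)) (cls p (q1-q2))"
proof -
  have q: "2*p > 1" using prime_gt_1_nat[OF P(1)] by simp
  note gA = good_A[OF q] and gB = good_B[OF P] and gC = good_C[OF P]
  show ?thesis
    unfolding psiP_def alphaP_def betaP_def PiS_H Fn_def
    using W_class[OF P gA v(1)] W_class[OF P gA v(2)] W_class[OF P gA v(3)] W_class[OF P gA v(4)]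
      W_class[OF P gB v(1)] W_class[OF P gB v(2)] W_class[OF P gB v(3)] W_class[OF P gB v(4)]
      W_class[OF P gC v(1)] W_class[OF P gC v(2)] W_class[OF P gC v(3)] W_class[OF P gC v(4)]
    by simp
qed

definition K :: "nat \<Rightarrow> (int \<times> int \<times> int \<times> int) set" where
  "K p = {(2,2,2,2), (1,1,2,2), (int p,1,2,2), (2,1,1,1), (2,int p,1,1), (2,1,int p,1)}"

lemma in_K:
  assumes P: "prime p" "odd p"
    and v: "\<not> int (2 * p) dvd q1" "\<not> int (2 * p) dvd q2"
      "\<not> int (2 * p) dvd (q1 + q2)" "\<not> int (2 * p) dvd (q1 - q2)"
  shows "Fn p (cls p q1) (cls p q2) (cls p (q1+q2)) (cls p (q1-q2)) \<in> (\<lambda>(a,b,c,d). Fn p a b c d) ` K p"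
proof -
  have e1: "even q1 \<Longrightarrow> \<not> int p dvd q1" using ev_p[OF P] v(1) by blast
  have e2: "even q2 \<Longrightarrow> \<not> int p dvd q2" using ev_p[OF P] v(2) by blast
  have e3: "even (q1+q2) \<Longrightarrow> \<not> int p dvd (q1+q2)" using ev_p[OF P] v(3) by blast
  have e4: "even (q1-q2) \<Longrightarrow> \<not> int p dvd (q1-q2)" using ev_p[OF P] v(4) by blast
  have d12: "int p dvd q1 \<Longrightarrow> int p dvd q2 \<Longrightarrow> int p dvd (q1+q2) \<and> int p dvd (q1-q2)" by simp
  have d13: "int p dvd q1 \<Longrightarrow> int p dvd (q1+q2) \<Longrightarrow> int p dvd q2"
    using dvd_diff[of "int p" "q1+q2" q1] by simp
  have d23: "int p dvd q2 \<Longrightarrow> int p dvd (q1+q2) \<Longrightarrow> int p dvd q1"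
    using dvd_diff[of "int p" "q1+q2" q2] by simp
  have d14: "int p dvd q1 \<Longrightarrow> int p dvd (q1-q2) \<Longrightarrow> int p dvd q2"
    using dvd_diff[of "int p" q1 "q1-q2"] by simp
  have d24: "int p dvd q2 \<Longrightarrow> int p dvd (q1-q2) \<Longrightarrow> int p dvd q1"
    using dvd_add[of "int p" "q1-q2" q2] by simp
  have d34: "int p dvd (q1+q2) \<Longrightarrow> int p dvd (q1-q2) \<Longrightarrow> int p dvd q1"
  proof -
    assume a: "int p dvd (q1+q2)" "int p dvd (q1-q2)"
    have s2: "(q1+q2)+(q1-q2) = 2*q1" by simp
    have "int p dvd (q1+q2)+(q1-q2)" using a by (rule dvd_add)
    hence "int p dvd 2 * q1" unfolding s2 .
    moreover have "prime (int p)" using P by simp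
    moreover have "\<not> int p dvd 2"
    proof
      assume "int p dvd 2"
      hence "p dvd 2" using int_dvd_int_iff[of p 2] by simp
      hence "p \<le> 2" by (simp add: dvd_imp_le)
      hence "p = 2" using prime_ge_2_nat[OF P(1)] by linarith
      with P(2) show False by simp
    qed
    ultimately show ?thesis using prime_dvd_mult_iff by blast
  qed
  have memK: "\<And>x y z w. (x,y,z,w) \<in> K p \<Longrightarrow> Fn p x y z w \<in> (\<lambda>(a,b,c,d). Fn p a b c d) ` K p"
    by (rule image_eqI) auto
  have K1: "(2,2,2,2) \<in> K p" "(1,1,2,2) \<in> K p" "(int p,1,2,2) \<in> K p" "(2,1,1,1) \<in> K p"
     "(2,int p,1,1) \<in> K p" "(2,1,int p,1) \<in> K p" unfolding K_def by simp_all
  show ?thesis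
  proof (cases "even q1")
    case E1: True
    have c1: "cls p q1 = 2" using E1 by (simp add: cls_def)
    show ?thesis
    proof (cases "even q2")
      case True
      have "cls p q2 = 2" "cls p (q1+q2) = 2" "cls p (q1-q2) = 2" using E1 True by (simp_all add: cls_def)
      thus ?thesis using c1 memK[OF K1(1)] by simp
    next
      case O2: False
      have o: "odd (q1+q2)" "odd (q1-q2)" using E1 O2 by simp_all
      show ?thesis
      proof (cases "int p dvd q2")
        case True
        have "\<not> int p dvd (q1+q2)" "\<not> int p dvd (q1-q2)" using True d23 d24 e1 E1 by blast+
        hence "cls p q2 = int p" "cls p (q1+q2) = 1" "cls p (q1-q2) = 1"
          using True O2 o by (simp_all add: cls_def)
        thus ?thesis using c1 memK[OF K1(5)] by simp
      next
        case n2: False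
        show ?thesis
        proof (cases "int p dvd (q1+q2)")
          case True
          have "\<not> int p dvd (q1-q2)" using True d34 e1 E1 by blast
          hence "cls p q2 = 1" "cls p (q1+q2) = int p" "cls p (q1-q2) = 1"
            using True O2 o n2 by (simp_all add: cls_def)
          thus ?thesis using c1 memK[OF K1(6)] by simp
        next
          case n3: False
          show ?thesis
          proof (cases "int p dvd (q1-q2)")
            case True
            hence "cls p q2 = 1" "cls p (q1+q2) = 1" "cls p (q1-q2) = int p"
              using True O2 o n2 n3 by (simp_all add: cls_def)
            thus ?thesis using c1 memK[OF K1(6)] by (simp add: Fn_sym2[of p 2 1 1 "int p"])
          next
            case False
            hence "cls p q2 = 1" "cls p (q1+q2) = 1" "cls p (q1-q2) = 1"
              using O2 o n2 n3 by (simp_all add: cls_def)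
            thus ?thesis using c1 memK[OF K1(4)] by simp
          qed
        qed
      qed
    qed
  next
    case O1: False
    show ?thesis
    proof (cases "even q2")
      case E2: True
      have c2: "cls p q2 = 2" using E2 by (simp add: cls_def)
      have o: "odd (q1+q2)" "odd (q1-q2)" using E2 O1 by simp_all
      show ?thesis
      proof (cases "int p dvd q1")
        case True
        have "\<not> int p dvd (q1+q2)" "\<not> int p dvd (q1-q2)" using True d13 d14 e2 E2 by blast+
        hence "cls p q1 = int p" "cls p (q1+q2) = 1" "cls p (q1-q2) = 1"
          using True O1 o by (simp_all add: cls_def)
        thus ?thesis using c2 memK[OF K1(5)] by (simp add: Fn_sym1[of p "int p" 2])
      next
        case n1: False
        show ?thesis
        proof (cases "int p dvd (q1+q2)")
          case True
          have "\<not> int p dvd (q1-q2)" using True d34 n1 by blast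
          hence "cls p q1 = 1" "cls p (q1+q2) = int p" "cls p (q1-q2) = 1"
            using True O1 o n1 by (simp_all add: cls_def)
          thus ?thesis using c2 memK[OF K1(6)] by (simp add: Fn_sym1[of p 1 2])
        next
          case n3: False
          show ?thesis
          proof (cases "int p dvd (q1-q2)")
            case True
            hence "cls p q1 = 1" "cls p (q1+q2) = 1" "cls p (q1-q2) = int p"
              using True O1 o n1 n3 by (simp_all add: cls_def)
            thus ?thesis using c2 memK[OF K1(6)] by (simp add: Fn_sym1[of p 1 2] Fn_sym2[of p 2 1 1 "int p"])
          next
            case False
            hence "cls p q1 = 1" "cls p (q1+q2) = 1" "cls p (q1-q2) = 1"
              using O1 o n1 n3 by (simp_all add: cls_def)
            thus ?thesis using c2 memK[OF K1(4)] by (simp add: Fn_sym1[of p 1 2])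
          qed
        qed
      qed
    next
      case O2: False
      have ev: "even (q1+q2)" "even (q1-q2)" using O1 O2 by simp_all
      have cc: "cls p (q1+q2) = 2" "cls p (q1-q2) = 2" using ev by (simp_all add: cls_def)
      show ?thesis
      proof (cases "int p dvd q1")
        case True
        have "\<not> int p dvd q2" using True d12 e3 ev by blast
        hence "cls p q1 = int p" "cls p q2 = 1" using True O1 O2 by (simp_all add: cls_def)
        thus ?thesis using cc memK[OF K1(3)] by simp
      next
        case n1: False
        show ?thesis
        proof (cases "int p dvd q2")
          case True
          hence "cls p q1 = 1" "cls p q2 = int p" using n1 O1 O2 by (simp_all add: cls_def)
          thus ?thesis using cc memK[OF K1(3)] by (simp add: Fn_sym1[of p 1 "int p"])
        next
          case False
          hence "cls p q1 = 1" "cls p q2 = 1" using n1 O1 O2 by (simp_all add: cls_def)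
          thus ?thesis using cc memK[OF K1(2)] by simp
        qed
      qed
    qed
  qed
qed


theorem proposition3p1p5:
  fixes p :: nat
  assumes "prime p" and "odd p"
  shows "finite {(psiP p q1 q2, alphaP p q1 q2, betaP p q1 q2) | q1 q2 :: int.
                   \<not> int (2 * p) dvd q1 \<and> \<not> int (2 * p) dvd q2 \<and>
                   \<not> int (2 * p) dvd (q1 + q2) \<and> \<not> int (2 * p) dvd (q1 - q2)}
       \<and> card {(psiP p q1 q2, alphaP p q1 q2, betaP p q1 q2) | q1 q2 :: int.
                   \<not> int (2 * p) dvd q1 \<and> \<not> int (2 * p) dvd q2 \<and>
                   \<not> int (2 * p) dvd (q1 + q2) \<and> \<not> int (2 * p) dvd (q1 - q2)} \<le> 6"
  (is "finite ?X \<and> card ?X \<le> 6")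
proof -
  have sub: "?X \<subseteq> (\<lambda>(a,b,c,d). Fn p a b c d) ` K p"
  proof
    fix x assume "x \<in> ?X"
    then obtain q1 q2 where x: "x = (psiP p q1 q2, alphaP p q1 q2, betaP p q1 q2)"
      and v: "\<not> int (2 * p) dvd q1" "\<not> int (2 * p) dvd q2"
      "\<not> int (2 * p) dvd (q1 + q2)" "\<not> int (2 * p) dvd (q1 - q2)" by blast
    show "x \<in> (\<lambda>(a,b,c,d). Fn p a b c d) ` K p"
      unfolding x triple_eq[OF assms v] by (rule in_K[OF assms v])
  qed
  have KL: "K p = set [(2,2,2,2), (1,1,2,2), (int p,1,2,2), (2,1,1,1), (2,int p,1,1), (2,1,int p,1)]"
    unfolding K_def by simp
  have fK: "finite (K p)" unfolding KL by simp
  have cK: "card (K p) \<le> 6" unfolding KL using card_length by (rule order_trans) simp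
  have "card ?X \<le> card ((\<lambda>(a,b,c,d). Fn p a b c d) ` K p)" using sub fK by (intro card_mono) auto
  also have "\<dots> \<le> card (K p)" by (rule card_image_le[OF fK])
  finally have "card ?X \<le> card (K p)" .
  moreover have "finite ?X" using finite_subset[OF sub finite_imageI[OF fK]] .
  ultimately show ?thesis using cK by linarith
qed

end
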